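(* Let lines in the real projective plane be in bounded general position, with associated graph $G$. Then every edge of $G$ lies on the boundary of at least one alcove.
   Context: Lines in $\mathbb{R}P^2$ are in general position if no three pass through a common point, and in bounded position if all pairwise intersections lie in $\mathbb{R}^2$. The graph $G$ has as vertices the pairwise intersection points of the lines; two vertices are joined by an edge if some line of the arrangement contains both and no third vertex lies between them on that line; the edge is the closed segment joining them. An alcove is a subset $V\subset\mathbb{R}^2$ which is compact, convex and connected, whose boundary is a union of edges of $G$ belonging to distinct lines, and which contains no proper subset with these two properties. *)

theory Defs
  imports "HOL-Analysis.Analysis"
begin

text \<open>Points of the affine chart R^2 of RP^2 are pairs of reals. Under bounded position
  no line of the arrangement is the line at infinity (when there are at least two lines),
  so each line is represented by its affine part, a set a*x + b*y = c with (a,b) nonzero.\<close>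

definition is_line :: "(real \<times> real) set \<Rightarrow> bool" where
  "is_line L \<longleftrightarrow> (\<exists>a b c. (a, b) \<noteq> (0, 0) \<and> L = {p. a * fst p + b * snd p = c})"

definition general_position :: "(real \<times> real) set set \<Rightarrow> bool" where
  "general_position A \<longleftrightarrow>
     (\<forall>L1\<in>A. \<forall>L2\<in>A. \<forall>L3\<in>A. L1 \<noteq> L2 \<and> L1 \<noteq> L3 \<and> L2 \<noteq> L3 \<longrightarrow> L1 \<inter> L2 \<inter> L3 = {})"

text \<open>All pairwise intersections lie in R^2 (no two lines are parallel).\<close>
definition bounded_position :: "(real \<times> real) set set \<Rightarrow> bool" where
  "bounded_position A \<longleftrightarrow> (\<forall>L1\<in>A. \<forall>L2\<in>A. L1 \<noteq> L2 \<longrightarrow> L1 \<inter> L2 \<noteq> {})"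

definition vertices :: "(real \<times> real) set set \<Rightarrow> (real \<times> real) set" where
  "vertices A = {p. \<exists>L1\<in>A. \<exists>L2\<in>A. L1 \<noteq> L2 \<and> p \<in> L1 \<and> p \<in> L2}"

definition edge_on :: "(real \<times> real) set set \<Rightarrow> (real \<times> real) set \<Rightarrow> (real \<times> real) set \<Rightarrow> bool" where
  "edge_on A L e \<longleftrightarrow> L \<in> A \<and>
     (\<exists>p q. p \<in> vertices A \<and> q \<in> vertices A \<and> p \<noteq> q \<and> p \<in> L \<and> q \<in> L \<and>
            (\<forall>r\<in>vertices A. r \<notin> open_segment p q) \<and> e = closed_segment p q)"

definition is_edge :: "(real \<times> real) set set \<Rightarrow> (real \<times> real) set \<Rightarrow> bool" where
  "is_edge A e \<longleftrightarrow> (\<exists>L. edge_on A L e)"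

definition alcove_shape :: "(real \<times> real) set set \<Rightarrow> (real \<times> real) set \<Rightarrow> bool" where
  "alcove_shape A V \<longleftrightarrow> compact V \<and> convex V \<and> connected V \<and> interior V \<noteq> {} \<and>
     (\<exists>E lineof. (\<forall>e\<in>E. edge_on A (lineof e) e) \<and> inj_on lineof E \<and> frontier V = \<Union>E)"

definition alcove :: "(real \<times> real) set set \<Rightarrow> (real \<times> real) set \<Rightarrow> bool" where
  "alcove A V \<longleftrightarrow> alcove_shape A V \<and> \<not> (\<exists>W. W \<subset> V \<and> alcove_shape A W)"

end

theory Submission
  imports Defs
begin


definition goodrep :: "(real \<times> real) set set \<Rightarrow> ((real \<times> real) set \<Rightarrow> real \<times> real) \<Rightarrow> ((real \<times> real) set \<Rightarrow> real) \<Rightarrow> bool" where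
  "goodrep A u d \<longleftrightarrow> (\<forall>M\<in>A. u M \<noteq> 0 \<and> M = {x. inner (u M) x = d M})"

definition Cset :: "(real \<times> real) set set \<Rightarrow> ((real \<times> real) set \<Rightarrow> real \<times> real) \<Rightarrow> ((real \<times> real) set \<Rightarrow> real) \<Rightarrow> (real \<times> real) set" where
  "Cset A u d = {x. \<forall>M\<in>A. d M \<le> inner (u M) x}"

definition perp :: "real \<times> real \<Rightarrow> real \<times> real" where
  "perp u = (- snd u, fst u)"

lemma perp_orth: "inner u (perp u) = 0"
  by (cases u) (simp add: perp_def inner_Pair)

lemma perp_nz: "u \<noteq> 0 \<Longrightarrow> perp u \<noteq> 0"
  by (cases u) (auto simp: perp_def zero_prod_def)

lemma perp_lemma:
  fixes u w :: "real \<times> real"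
  assumes "u \<noteq> 0" "inner u w = 0"
  shows "\<exists>t. w = t *\<^sub>R perp u"
proof -
  obtain a b where u: "u = (a,b)" by (cases u)
  obtain w1 w2 where w: "w = (w1,w2)" by (cases w)
  have h: "a*w1 + b*w2 = 0" using assms(2) by (simp add: u w inner_Pair)
  have nz: "a*a + b*b \<noteq> 0" using assms(1) u
    by (auto simp: zero_prod_def sum_squares_eq_zero_iff)
  define t where "t = (-b*w1 + a*w2)/(a*a+b*b)"
  have "w1 = t * (-b)"
  proof -
    have "t * (-b) * (a*a+b*b) = w1 * (a*a+b*b)"
      unfolding t_def using nz h by (simp add: field_simps) (smt (verit) mult.commute mult.left_commute ring_distribs)
    then show ?thesis using nz by (metis mult_right_cancel)
  qed
  moreover have "w2 = t * a"
  proof -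
    have "t * a * (a*a+b*b) = w2 * (a*a+b*b)"
      unfolding t_def using nz h by (simp add: field_simps) (smt (verit) mult.commute mult.left_commute ring_distribs)
    then show ?thesis using nz by (metis mult_right_cancel)
  qed
  ultimately show ?thesis by (auto simp: u w perp_def)
qed



lemma perp_perp: "perp (perp u) = - u"
  by (cases u) (simp add: perp_def)

lemma goodrepD: "goodrep A u d \<Longrightarrow> M \<in> A \<Longrightarrow> x \<in> M \<longleftrightarrow> inner (u M) x = d M"
  unfolding goodrep_def by blast

lemma goodrep_nz: "goodrep A u d \<Longrightarrow> M \<in> A \<Longrightarrow> u M \<noteq> 0"
  unfolding goodrep_def by blast

lemma unique_meet:
  assumes g: "goodrep A u d" and M1: "M1 \<in> A" and M2: "M2 \<in> A" and ne: "M1 \<noteq> M2"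
    and x1: "x \<in> M1" and x2: "x \<in> M2" and y1: "y \<in> M1" and y2: "y \<in> M2"
  shows "x = y"
proof (rule ccontr)
  assume xy: "x \<noteq> y"
  have e1: "inner (u M1) (y - x) = 0" using goodrepD[OF g M1] x1 y1 by (simp add: inner_diff_right)
  have e2: "inner (u M2) (y - x) = 0" using goodrepD[OF g M2] x2 y2 by (simp add: inner_diff_right)
  obtain t where t: "y - x = t *\<^sub>R perp (u M1)" using perp_lemma[OF goodrep_nz[OF g M1] e1] by blast
  have "t \<noteq> 0" using t xy by auto
  then have "inner (u M2) (perp (u M1)) = 0" using e2 t by simp
  then have "inner (perp (u M1)) (u M2) = 0" by (simp add: inner_commute)
  then obtain s where s: "u M2 = s *\<^sub>R perp (perp (u M1))"
    using perp_lemma[OF perp_nz[OF goodrep_nz[OF g M1]]] by blast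
  then have s': "u M2 = (-s) *\<^sub>R u M1" by (simp add: perp_perp)
  have sn: "s \<noteq> 0" using s' goodrep_nz[OF g M2] by auto
  have d2: "d M2 = (-s) * d M1" using goodrepD[OF g M1] goodrepD[OF g M2] x1 x2 s' by simp
  have "M1 = M2"
  proof -
    { fix z have "z \<in> M2 \<longleftrightarrow> (-s) * inner (u M1) z = (-s) * d M1"
        using goodrepD[OF g M2] s' d2 by simp
      also have "\<dots> \<longleftrightarrow> z \<in> M1" using sn goodrepD[OF g M1] by simp
      finally have "z \<in> M2 \<longleftrightarrow> z \<in> M1" . }
    then show ?thesis by blast
  qed
  then show False using ne by simp
qed

lemma ray:
  assumes fin: "finite A" and g: "goodrep A u d" and x: "x \<in> Cset A u d"
    and w: "\<forall>M\<in>A. x \<in> M \<longrightarrow> 0 \<le> inner (u M) w"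
  shows "\<exists>e>0. x + e *\<^sub>R w \<in> Cset A u d"
proof -
  have ev: "\<forall>M\<in>A. eventually (\<lambda>e. d M \<le> inner (u M) (x + e *\<^sub>R w)) (at_right 0)"
  proof
    fix M assume M: "M \<in> A"
    show "eventually (\<lambda>e. d M \<le> inner (u M) (x + e *\<^sub>R w)) (at_right 0)"
    proof (cases "x \<in> M")
      case True
      then have "inner (u M) x = d M" using goodrepD[OF g M] by simp
      then have "\<forall>e>0. d M \<le> inner (u M) (x + e *\<^sub>R w)"
        using w M True by (simp add: inner_add_right)
      then show ?thesis using eventually_at_right_less[of 0]
        by (auto elim: eventually_mono)
    next
      case False
      have "d M \<le> inner (u M) x" using x M unfolding Cset_def by auto
      moreover have "inner (u M) x \<noteq> d M" using False goodrepD[OF g M] by auto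
      ultimately have lt: "d M < inner (u M) x" by simp
      have "((\<lambda>e. inner (u M) (x + e *\<^sub>R w)) \<longlongrightarrow> inner (u M) (x + 0 *\<^sub>R w)) (at_right 0)"
        by (intro tendsto_intros)
      then have "((\<lambda>e. inner (u M) (x + e *\<^sub>R w)) \<longlongrightarrow> inner (u M) x) (at_right 0)" by simp
      from order_tendstoD(1)[OF this lt] show ?thesis by (auto elim: eventually_mono)
    qed
  qed
  have "eventually (\<lambda>e. \<forall>M\<in>A. d M \<le> inner (u M) (x + e *\<^sub>R w)) (at_right 0)"
    using eventually_ball_finite[OF fin ev] .
  then have "eventually (\<lambda>e. 0 < e \<and> (\<forall>M\<in>A. d M \<le> inner (u M) (x + e *\<^sub>R w))) (at_right (0::real))"
    using eventually_at_right_less[of 0] by (auto elim: eventually_conj[THEN eventually_mono])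
  from eventually_happens'[OF trivial_limit_at_right_real this] show ?thesis
    unfolding Cset_def by auto
qed

lemma Cset_closed: "closed (Cset A u d)"
proof -
  have "Cset A u d = (\<Inter>M\<in>A. {x. d M \<le> inner (u M) x})" unfolding Cset_def by auto
  then show ?thesis by (simp add: closed_INT closed_halfspace_ge)
qed

lemma Cset_convex: "convex (Cset A u d)"
proof -
  have "Cset A u d = (\<Inter>M\<in>A. {x. d M \<le> inner (u M) x})" unfolding Cset_def by auto
  then show ?thesis by (simp add: convex_INT convex_halfspace_ge)
qed

lemma interior_avoid:
  assumes g: "goodrep A u d" and M: "M \<in> A" and x: "x \<in> interior (Cset A u d)"
  shows "x \<notin> M"
proof
  assume xM: "x \<in> M"
  obtain r where r: "r > 0" "ball x r \<subseteq> Cset A u d" using x by (meson mem_interior)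
  have nz: "u M \<noteq> 0" using goodrep_nz[OF g M] .
  define y where "y = x - (r / 2 / norm (u M)) *\<^sub>R u M"
  have "dist x y = r/2" using nz r unfolding y_def dist_norm by simp
  then have "y \<in> Cset A u d" using r by auto
  then have "d M \<le> inner (u M) y" using M unfolding Cset_def by auto
  moreover have "inner (u M) y = d M - (r / 2 / norm (u M)) * inner (u M) (u M)"
    using goodrepD[OF g M] xM unfolding y_def by (simp add: inner_diff_right)
  moreover have "(r / 2 / norm (u M)) * inner (u M) (u M) > 0"
    using nz r by simp
  ultimately show False by simp
qed

lemma frontier_Cset:
  assumes g: "goodrep A u d" and fin: "finite A"
  shows "frontier (Cset A u d) = (\<Union>M\<in>A. Cset A u d \<inter> M)"
proof
  show "frontier (Cset A u d) \<subseteq> (\<Union>M\<in>A. Cset A u d \<inter> M)"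
  proof
    fix x assume x: "x \<in> frontier (Cset A u d)"
    then have xC: "x \<in> Cset A u d" using Cset_closed by (simp add: frontier_def)
    show "x \<in> (\<Union>M\<in>A. Cset A u d \<inter> M)"
    proof (rule ccontr)
      assume "x \<notin> (\<Union>M\<in>A. Cset A u d \<inter> M)"
      then have "\<forall>M\<in>A. d M < inner (u M) x"
      proof (intro ballI)
        fix M assume M: "M \<in> A" and nx: "x \<notin> (\<Union>M\<in>A. Cset A u d \<inter> M)"
        have "d M \<le> inner (u M) x" using xC M unfolding Cset_def by auto
        moreover have "x \<notin> M" using nx xC M by blast
        then have "inner (u M) x \<noteq> d M" using goodrepD[OF g M] by simp
        ultimately show "d M < inner (u M) x" by simp
      qed
      then have "x \<in> (\<Inter>M\<in>A. {x. d M < inner (u M) x})" by auto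
      moreover have "open (\<Inter>M\<in>A. {x. d M < inner (u M) x})"
        using fin by (intro open_INT) (auto simp: open_halfspace_gt)
      moreover have "(\<Inter>M\<in>A. {x. d M < inner (u M) x}) \<subseteq> Cset A u d"
        unfolding Cset_def by force
      ultimately have "x \<in> interior (Cset A u d)" by (meson interior_maximal subsetD interior_open)
      then show False using x by (simp add: frontier_def)
    qed
  qed
next
  show "(\<Union>M\<in>A. Cset A u d \<inter> M) \<subseteq> frontier (Cset A u d)"
    using interior_avoid[OF g] Cset_closed by (auto simp: frontier_def)
qed



lemma dir_ok:
  assumes g: "goodrep A u d" and gp: "general_position A" and M: "M \<in> A" and x: "x \<in> M"
  shows "\<exists>w\<in>{perp (u M), - perp (u M)}. \<forall>M'\<in>A. x \<in> M' \<longrightarrow> 0 \<le> inner (u M') w"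
proof (cases "\<exists>M'\<in>A. M' \<noteq> M \<and> x \<in> M'")
  case True
  then obtain M' where M': "M' \<in> A" "M' \<noteq> M" "x \<in> M'" by blast
  define w where "w = (if 0 \<le> inner (u M') (perp (u M)) then perp (u M) else - perp (u M))"
  have "\<forall>M''\<in>A. x \<in> M'' \<longrightarrow> 0 \<le> inner (u M'') w"
  proof (intro ballI impI)
    fix M'' assume M'': "M'' \<in> A" "x \<in> M''"
    show "0 \<le> inner (u M'') w"
    proof (cases "M'' = M")
      case True then show ?thesis by (simp add: w_def perp_orth)
    next
      case False
      have "M'' = M'"
      proof (rule ccontr)
        assume "M'' \<noteq> M'"
        then have "M \<inter> M' \<inter> M'' = {}"
          using gp[unfolded general_position_def, rule_format, OF M M'(1) M''(1)] M'(2) False by auto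
        then show False using x M' M'' by blast
      qed
      then show ?thesis by (simp add: w_def)
    qed
  qed
  then show ?thesis unfolding w_def by (auto split: if_splits)
next
  case False
  then have "\<forall>M'\<in>A. x \<in> M' \<longrightarrow> 0 \<le> inner (u M') (perp (u M))"
    by (auto simp: perp_orth)
  then show ?thesis by blast
qed

lemma edge_lemma:
  assumes g: "goodrep A u d" and fin: "finite A" and gp: "general_position A"
    and bd: "bounded (Cset A u d)" and M: "M \<in> A" and ne: "Cset A u d \<inter> M \<noteq> {}"
  shows "edge_on A M (Cset A u d \<inter> M)"
proof -
  define K where "K = Cset A u d \<inter> M"
  define v where "v = perp (u M)"
  have nzM: "u M \<noteq> 0" using goodrep_nz[OF g M] .
  have vnz: "v \<noteq> 0" unfolding v_def using perp_nz[OF nzM] .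
  have vv: "inner v v > 0" using vnz by simp
  have uv: "inner (u M) v = 0" unfolding v_def by (rule perp_orth)
  have Meq: "M = {x. inner (u M) x = d M}" using g M unfolding goodrep_def by blast
  have clM: "closed M" by (subst Meq) (simp add: closed_hyperplane)
  have cvM: "convex M" by (subst Meq) (simp add: convex_hyperplane)
  have cK: "compact K" unfolding K_def compact_eq_bounded_closed
    using bd clM Cset_closed by (auto intro: bounded_Int)
  have Kne: "K \<noteq> {}" using ne K_def by simp
  have cvK: "convex K" unfolding K_def using Cset_convex cvM by (rule convex_Int)
  have cont: "continuous_on K (\<lambda>y. inner v y)" by (intro continuous_intros)
  obtain a where aK: "a \<in> K" and amin: "\<forall>y\<in>K. inner v a \<le> inner v y"
    using continuous_attains_inf[OF cK Kne cont] by blast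
  obtain b where bK: "b \<in> K" and bmax: "\<forall>y\<in>K. inner v y \<le> inner v b"
    using continuous_attains_sup[OF cK Kne cont] by blast
  have inM: "y \<in> K \<Longrightarrow> y \<in> M" for y unfolding K_def by simp
  have inC: "y \<in> K \<Longrightarrow> y \<in> Cset A u d" for y unfolding K_def by simp
  have shiftK: "y + e *\<^sub>R w \<in> K" if a1: "y \<in> K" and a2: "y + e *\<^sub>R w \<in> Cset A u d"
    and a3: "w \<in> {v, -v}" for y e w
  proof -
    have "inner (u M) w = 0" using a3 uv by auto
    moreover have "inner (u M) y = d M" using inM[OF a1] goodrepD[OF g M] by blast
    ultimately have "inner (u M) (y + e *\<^sub>R w) = d M" by (simp add: inner_add_right)
    then have "y + e *\<^sub>R w \<in> M" using goodrepD[OF g M] by blast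
    then show ?thesis using a2 unfolding K_def by blast
  qed
  have diff: "y \<in> M \<Longrightarrow> z \<in> M \<Longrightarrow> \<exists>t. z - y = t *\<^sub>R v" for y z
  proof -
    assume "y \<in> M" "z \<in> M"
    then have "inner (u M) (z - y) = 0" using goodrepD[OF g M] by (simp add: inner_diff_right)
    then show ?thesis unfolding v_def by (rule perp_lemma[OF nzM])
  qed
  have ab: "a \<noteq> b"
  proof
    assume "a = b"
    obtain w where w: "w \<in> {v, -v}" "\<forall>M'\<in>A. a \<in> M' \<longrightarrow> 0 \<le> inner (u M') w"
      using dir_ok[OF g gp M inM[OF aK]] unfolding v_def by blast
    obtain e where e: "e > 0" "a + e *\<^sub>R w \<in> Cset A u d"
      using ray[OF fin g inC[OF aK] w(2)] by blast
    have yK: "a + e *\<^sub>R w \<in> K" using shiftK[OF aK e(2) w(1)] .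
    have "inner v a \<le> inner v (a + e *\<^sub>R w)" using amin yK by blast
    moreover have "inner v (a + e *\<^sub>R w) \<le> inner v b" using bmax yK by blast
    ultimately have "inner v (a + e *\<^sub>R w) = inner v a" using \<open>a = b\<close> by simp
    moreover have "inner v (a + e *\<^sub>R w) \<noteq> inner v a" using w(1) e(1) vv
      by (auto simp: inner_add_right)
    ultimately show False by simp
  qed
  have avert: "a \<in> vertices A"
  proof (rule ccontr)
    assume na: "a \<notin> vertices A"
    have w: "\<forall>M'\<in>A. a \<in> M' \<longrightarrow> 0 \<le> inner (u M') (-v)"
    proof (intro ballI impI)
      fix M' assume "M' \<in> A" "a \<in> M'"
      then have "M' = M" using na inM[OF aK] M unfolding vertices_def by blast
      then show "0 \<le> inner (u M') (-v)" using uv by simp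
    qed
    obtain e where e: "e > 0" "a + e *\<^sub>R (-v) \<in> Cset A u d"
      using ray[OF fin g inC[OF aK] w] by blast
    have yK: "a + e *\<^sub>R (-v) \<in> K" using shiftK[OF aK e(2)] by simp
    have "inner v (a + e *\<^sub>R (-v)) = inner v a - e * inner v v" by (simp add: inner_diff_right)
    moreover have "e * inner v v > 0" using e(1) vv by simp
    ultimately have "inner v (a + e *\<^sub>R (-v)) < inner v a" by linarith
    moreover have "inner v a \<le> inner v (a + e *\<^sub>R (-v))" using amin yK by blast
    ultimately show False by linarith
  qed
  have bvert: "b \<in> vertices A"
  proof (rule ccontr)
    assume na: "b \<notin> vertices A"
    have w: "\<forall>M'\<in>A. b \<in> M' \<longrightarrow> 0 \<le> inner (u M') v"
    proof (intro ballI impI)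
      fix M' assume "M' \<in> A" "b \<in> M'"
      then have "M' = M" using na inM[OF bK] M unfolding vertices_def by blast
      then show "0 \<le> inner (u M') v" using uv by simp
    qed
    obtain e where e: "e > 0" "b + e *\<^sub>R v \<in> Cset A u d"
      using ray[OF fin g inC[OF bK] w] by blast
    have yK: "b + e *\<^sub>R v \<in> K" using shiftK[OF bK e(2)] by simp
    have "inner v (b + e *\<^sub>R v) = inner v b + e * inner v v" by (simp add: inner_add_right)
    moreover have "e * inner v v > 0" using e(1) vv by simp
    ultimately have "inner v (b + e *\<^sub>R v) > inner v b" by linarith
    moreover have "inner v (b + e *\<^sub>R v) \<le> inner v b" using bmax yK by blast
    ultimately show False by linarith
  qed
  have novert: "\<forall>r\<in>vertices A. r \<notin> open_segment a b"
  proof (intro ballI notI)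
    fix r assume rv: "r \<in> vertices A" and rs: "r \<in> open_segment a b"
    obtain t where t: "0 < t" "t < 1" "r = (1 - t) *\<^sub>R a + t *\<^sub>R b"
      using rs by (auto simp: in_segment)
    obtain L1 L2 where L: "L1 \<in> A" "L2 \<in> A" "L1 \<noteq> L2" "r \<in> L1" "r \<in> L2"
      using rv unfolding vertices_def by blast
    obtain N where N: "N \<in> A" "N \<noteq> M" "r \<in> N" using L by (cases "L1 = M") auto
    have ia: "d N \<le> inner (u N) a" using inC[OF aK] N(1) unfolding Cset_def by auto
    have ib: "d N \<le> inner (u N) b" using inC[OF bK] N(1) unfolding Cset_def by auto
    have ir: "inner (u N) r = d N" using goodrepD[OF g N(1)] N(3) by simp
    have "inner (u N) r = (1 - t) * inner (u N) a + t * inner (u N) b"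
      using t(3) by (simp add: inner_add_right)
    then have e0: "(1 - t) * (inner (u N) a - d N) + t * (inner (u N) b - d N) = 0"
      using ir by (simp add: algebra_simps)
    have p1: "(1 - t) * (inner (u N) a - d N) \<ge> 0" using ia t(2) by simp
    have p2: "t * (inner (u N) b - d N) \<ge> 0" using ib t(1) by simp
    have "(1 - t) * (inner (u N) a - d N) = 0" "t * (inner (u N) b - d N) = 0"
      using e0 p1 p2 by linarith+
    then have "inner (u N) a = d N \<and> inner (u N) b = d N" using t(1,2) by simp
    then have "a \<in> N" "b \<in> N" using goodrepD[OF g N(1)] by auto
    then show False using unique_meet[OF g M N(1) N(2)[symmetric] inM[OF aK]] inM[OF bK] ab by blast
  qed
  have seg: "K = closed_segment a b"
  proof
    show "closed_segment a b \<subseteq> K" using closed_segment_subset[OF aK bK cvK] .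
  next
    show "K \<subseteq> closed_segment a b"
    proof
      fix y assume yK: "y \<in> K"
      obtain t where t: "y - a = t *\<^sub>R v" using diff[OF inM[OF aK] inM[OF yK]] by blast
      obtain s where s: "b - a = s *\<^sub>R v" using diff[OF inM[OF aK] inM[OF bK]] by blast
      have "inner v (y - a) \<ge> 0" using amin yK by (simp add: inner_diff_right)
      then have t0: "t \<ge> 0" using t vv by (simp add: zero_le_mult_iff)
      have "inner v (b - y) \<ge> 0" using bmax yK by (simp add: inner_diff_right)
      moreover have "b - y = (s - t) *\<^sub>R v" using s t by (simp add: algebra_simps)
      ultimately have ts: "t \<le> s" using vv by (simp add: zero_le_mult_iff)
      have s0: "s \<noteq> 0" using s ab by auto
      have "y = (1 - t/s) *\<^sub>R a + (t/s) *\<^sub>R b"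
      proof -
        have "(1 - t/s) *\<^sub>R a + (t/s) *\<^sub>R b = a + (t/s) *\<^sub>R (b - a)" by (simp add: algebra_simps)
        also have "\<dots> = a + t *\<^sub>R v" using s s0 by simp
        also have "\<dots> = y" using t by (simp add: algebra_simps)
        finally show ?thesis by simp
      qed
      moreover have "0 \<le> t/s" "t/s \<le> 1" using t0 ts s0 by (auto simp: divide_simps)
      ultimately show "y \<in> closed_segment a b" unfolding in_segment by blast
    qed
  qed
  show ?thesis unfolding edge_on_def K_def[symmetric]
    using M avert bvert ab inM[OF aK] inM[OF bK] novert seg by blast
qed



lemma minimal:
  assumes g: "goodrep A u d" and cvC: "convex C" and clC: "closed C" and intC: "interior C \<noteq> {}"
    and Ceq: "C = Cset A u d"
  shows "\<not> (\<exists>W. W \<subset> C \<and> alcove_shape A W)"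
proof
  assume "\<exists>W. W \<subset> C \<and> alcove_shape A W"
  then obtain W where WC: "W \<subset> C" and sh: "alcove_shape A W" by blast
  from sh obtain E lineof where cW: "compact W" and iW: "interior W \<noteq> {}"
    and E: "\<forall>e\<in>E. edge_on A (lineof e) e" and fW: "frontier W = \<Union>E"
    unfolding alcove_shape_def by blast
  have fWA: "frontier W \<subseteq> \<Union>A"
  proof
    fix x assume "x \<in> frontier W"
    then obtain e where e: "e \<in> E" "x \<in> e" using fW by blast
    then obtain p q where pq: "lineof e \<in> A" "p \<in> lineof e" "q \<in> lineof e" "e = closed_segment p q"
      using E unfolding edge_on_def by blast
    have "convex (lineof e)"
    proof -
      have "lineof e = {x. inner (u (lineof e)) x = d (lineof e)}" using goodrepD[OF g pq(1)] by blast
      then show ?thesis by (metis convex_hyperplane)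
    qed
    then have "e \<subseteq> lineof e" using pq closed_segment_subset by metis
    then show "x \<in> \<Union>A" using e pq(1) by blast
  qed
  have disj: "interior C \<inter> frontier W = {}"
    using fWA interior_avoid[OF g] Ceq by blast
  have conn: "connected (interior C)" using cvC by (simp add: convex_connected convex_interior)
  have "interior W \<subseteq> interior C" using WC by (simp add: interior_mono)
  then have "interior C \<inter> W \<noteq> {}" using iW interior_subset by blast
  then have "interior C - W = {}" using connected_Int_frontier[OF conn] disj by blast
  then have "interior C \<subseteq> W" by blast
  then have "closure (interior C) \<subseteq> W" using cW by (simp add: closure_minimal compact_imp_closed)
  then have "C \<subseteq> W" using convex_closure_interior[OF cvC intC] clC by (simp add: closure_closed)
  then show False using WC by blast
qed

lemma end_in_C:
  assumes g: "goodrep A u d" and L: "L \<in> A" and pL: "p \<in> L" and qL: "q \<in> L" and pq: "p \<noteq> q"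
    and nv: "\<forall>r\<in>vertices A. r \<notin> open_segment p q"
    and gm: "\<forall>M\<in>A. M \<noteq> L \<longrightarrow> d M < inner (u M) (midpoint p q)"
  shows "p \<in> Cset A u d"
  unfolding Cset_def
proof (intro CollectI ballI)
  fix M assume M: "M \<in> A"
  show "d M \<le> inner (u M) p"
  proof (rule ccontr)
    assume neg: "\<not> d M \<le> inner (u M) p"
    then have MnL: "M \<noteq> L" using pL goodrepD[OF g L] by auto
    have lm: "d M < inner (u M) (midpoint p q)" using gm M MnL by blast
    define fp where "fp = inner (u M) p - d M"
    define fm where "fm = inner (u M) (midpoint p q) - d M"
    have fp: "fp < 0" using neg fp_def by simp
    have fm: "fm > 0" using lm fm_def by simp
    define t where "t = fp / (fp - fm)"
    have t0: "0 < t" using fp fm unfolding t_def by (simp add: divide_neg_neg)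
    have t1: "t < 1" using fp fm unfolding t_def by (simp add: divide_simps)
    define z where "z = (1 - t/2) *\<^sub>R p + (t/2) *\<^sub>R q"
    have zs: "z \<in> open_segment p q" unfolding z_def in_segment using pq t0 t1
      by (intro conjI exI[of _ "t/2"]) auto
    have zeq: "z = p + t *\<^sub>R (midpoint p q - p)"
      unfolding z_def midpoint_def by (simp add: algebra_simps) (metis field_sum_of_halves scaleR_add_left)
    have "inner (u M) z = inner (u M) p + t * (inner (u M) (midpoint p q) - inner (u M) p)"
      by (subst zeq) (simp add: inner_add_right inner_diff_right)
    then have "inner (u M) z - d M = fp + t * (fm - fp)"
      unfolding fp_def fm_def by (simp add: algebra_simps)
    also have "\<dots> = 0" unfolding t_def using fp fm by (simp add: field_simps)
    finally have zM: "z \<in> M" using goodrepD[OF g M] by simp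
    have cvL: "convex L"
    proof -
      have "L = {x. inner (u L) x = d L}" using goodrepD[OF g L] by blast
      then show ?thesis by (metis convex_hyperplane)
    qed
    have "z \<in> L" using zs segment_open_subset_closed closed_segment_subset[OF pL qL cvL] by blast
    then have "z \<in> vertices A" using zM M L MnL unfolding vertices_def by blast
    then show False using nv zs by blast
  qed
qed



lemma bounded_lemma:
  assumes g: "goodrep A u d" and L: "L \<in> A" and Mp: "Mp \<in> A" and Mq: "Mq \<in> A" and ne: "Mp \<noteq> Mq"
    and pL: "p \<in> L" and qL: "q \<in> L" and pMp: "p \<in> Mp" and qMq: "q \<in> Mq"
    and rp: "r \<in> Mp" and rq: "r \<in> Mq" and rL: "d L < inner (u L) r"
    and mp: "d Mp < inner (u Mp) (midpoint p q)" and mq: "d Mq < inner (u Mq) (midpoint p q)"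
  shows "bounded (Cset A u d)"
  unfolding bounded_iff
proof (intro exI ballI)
  fix x assume x: "x \<in> Cset A u d"
  have ip: "inner (u Mp) p = d Mp" "inner (u Mp) r = d Mp" using goodrepD[OF g Mp] pMp rp by auto
  have iq: "inner (u Mq) q = d Mq" "inner (u Mq) r = d Mq" using goodrepD[OF g Mq] qMq rq by auto
  have iL: "inner (u L) p = d L" "inner (u L) q = d L" using goodrepD[OF g L] pL qL by auto
  have "inner (u Mp) (midpoint p q) = (inner (u Mp) p + inner (u Mp) q) / 2"
    unfolding midpoint_def by (simp add: inner_add_right)
  then have qp: "inner (u Mp) q > d Mp" using mp ip by simp
  have "inner (u Mq) (midpoint p q) = (inner (u Mq) p + inner (u Mq) q) / 2"
    unfolding midpoint_def by (simp add: inner_add_right)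
  then have pq: "inner (u Mq) p > d Mq" using mq iq by simp
  define a where "a = p - r"
  define b where "b = q - r"
  define z where "z = x - r"
  have xp: "d Mp \<le> inner (u Mp) x" using x Mp unfolding Cset_def by auto
  have xq: "d Mq \<le> inner (u Mq) x" using x Mq unfolding Cset_def by auto
  have xL: "d L \<le> inner (u L) x" using x L unfolding Cset_def by auto
  have qa: "inner (u Mq) a > 0" unfolding a_def using pq iq by (simp add: inner_diff_right)
  have pb: "inner (u Mp) b > 0" unfolding b_def using qp ip by (simp add: inner_diff_right)
  have qb: "inner (u Mq) b = 0" unfolding b_def using iq by (simp add: inner_diff_right)
  have pa: "inner (u Mp) a = 0" unfolding a_def using ip by (simp add: inner_diff_right)
  have qz: "inner (u Mq) z \<ge> 0" unfolding z_def using xq iq by (simp add: inner_diff_right)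
  have pz: "inner (u Mp) z \<ge> 0" unfolding z_def using xp ip by (simp add: inner_diff_right)
  define s where "s = inner (u Mq) z / inner (u Mq) a"
  define t where "t = inner (u Mp) z / inner (u Mp) b"
  have s0: "s \<ge> 0" unfolding s_def using qa qz by simp
  have t0: "t \<ge> 0" unfolding t_def using pb pz by simp
  define w where "w = z - s *\<^sub>R a - t *\<^sub>R b"
  have wq: "inner (u Mq) w = 0" unfolding w_def s_def using qa qb by (simp add: inner_diff_right)
  have wp: "inner (u Mp) w = 0" unfolding w_def t_def using pb pa by (simp add: inner_diff_right)
  have "r + w \<in> Mp" using goodrepD[OF g Mp] ip wp by (simp add: inner_add_right)
  moreover have "r + w \<in> Mq" using goodrepD[OF g Mq] iq wq by (simp add: inner_add_right)
  ultimately have "r = r + w" using unique_meet[OF g Mp Mq ne rp rq] by blast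
  then have w0: "w = 0" by simp
  then have zab: "z = s *\<^sub>R a + t *\<^sub>R b" unfolding w_def by (simp add: algebra_simps)
  have "inner (u L) x = inner (u L) r + s * (d L - inner (u L) r) + t * (d L - inner (u L) r)"
  proof -
    have "x = r + s *\<^sub>R a + t *\<^sub>R b" using zab unfolding z_def by (simp add: algebra_simps)
    then show ?thesis unfolding a_def b_def using iL by (simp add: inner_add_right inner_diff_right)
  qed
  then have "(s + t) * (inner (u L) r - d L) \<le> inner (u L) r - d L" using xL by (simp add: algebra_simps)
  then have st: "s + t \<le> 1" using rL by simp
  have "norm x = norm (r + s *\<^sub>R a + t *\<^sub>R b)" using zab unfolding z_def by (simp add: algebra_simps)
  also have "\<dots> \<le> norm r + s * norm a + t * norm b"
    using s0 t0 by (metis abs_of_nonneg norm_scaleR norm_triangle_le add_mono order_refl norm_triangle_ineq)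
  also have "\<dots> \<le> norm r + norm a + norm b"
  proof -
    have "s * norm a \<le> norm a" using s0 t0 st by (simp add: mult_left_le_one_le)
    moreover have "t * norm b \<le> norm b" using s0 t0 st by (simp add: mult_left_le_one_le)
    ultimately show ?thesis by simp
  qed
  finally show "norm x \<le> norm r + norm (p - r) + norm (q - r)" unfolding a_def b_def .
qed



theorem lemma1p9:
  fixes A :: "(real \<times> real) set set" and e :: "(real \<times> real) set"
  assumes "finite A"
    and "\<forall>L\<in>A. is_line L"
    and "general_position A"
    and "bounded_position A"
    and "is_edge A e"
  shows "\<exists>V. alcove A V \<and> e \<subseteq> frontier V"
proof -
  note fin = assms(1) and gp = assms(3) and bp = assms(4)
  have "\<forall>M\<in>A. \<exists>n c. n \<noteq> 0 \<and> M = {x. inner n x = c}"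
  proof
    fix M assume "M \<in> A"
    then obtain a b c where abc: "(a, b) \<noteq> (0, 0)" "M = {p. a * fst p + b * snd p = c}"
      using assms(2) unfolding is_line_def by blast
    have "M = {x. inner (a, b) x = c}" using abc(2) by (auto simp: inner_Pair)
    moreover have "(a, b) \<noteq> 0" using abc(1) by (simp add: zero_prod_def)
    ultimately show "\<exists>n c. n \<noteq> 0 \<and> M = {x. inner n x = c}" by blast
  qed
  then obtain nv where nv1: "\<forall>M\<in>A. \<exists>c. nv M \<noteq> 0 \<and> M = {x. inner (nv M) x = c}"
    using bchoice[of A "\<lambda>M n. \<exists>c. n \<noteq> 0 \<and> M = {x. inner n x = c}"] by blast
  then obtain cv where nvcv: "\<forall>M\<in>A. nv M \<noteq> 0 \<and> M = {x. inner (nv M) x = cv M}"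
    using bchoice[of A "\<lambda>M c. nv M \<noteq> 0 \<and> M = {x. inner (nv M) x = c}"] by blast
  then have g0: "goodrep A nv cv" unfolding goodrep_def .
  obtain L p q where L: "L \<in> A" and pv: "p \<in> vertices A" and qv: "q \<in> vertices A" and pq: "p \<noteq> q"
    and pL: "p \<in> L" and qL: "q \<in> L" and nov: "\<forall>r\<in>vertices A. r \<notin> open_segment p q"
    and eseg: "e = closed_segment p q"
    using assms(5) unfolding is_edge_def edge_on_def by blast
  have other: "\<exists>N. N \<in> A \<and> N \<noteq> L \<and> x \<in> N" if xv: "x \<in> vertices A" for x
  proof -
    obtain L1 L2 where "L1 \<in> A" "L2 \<in> A" "L1 \<noteq> L2" "x \<in> L1" "x \<in> L2"
      using xv unfolding vertices_def by blast
    then show ?thesis by (cases "L1 = L") auto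
  qed
  obtain Mp where Mp: "Mp \<in> A" "Mp \<noteq> L" "p \<in> Mp" using other[OF pv] by blast
  obtain Mq where Mq: "Mq \<in> A" "Mq \<noteq> L" "q \<in> Mq" using other[OF qv] by blast
  have MpMq: "Mp \<noteq> Mq"
  proof
    assume "Mp = Mq"
    then show False using unique_meet[OF g0 L Mp(1) Mp(2)[symmetric] pL Mp(3) qL] Mq(3) pq by blast
  qed
  obtain r where rp: "r \<in> Mp" and rq: "r \<in> Mq"
    using bp Mp(1) Mq(1) MpMq unfolding bounded_position_def by blast
  have rL: "r \<notin> L"
    using gp[unfolded general_position_def, rule_format, OF L Mp(1) Mq(1)] Mp(2) Mq(2) MpMq rp rq by auto
  define m where "m = midpoint p q"
  have mseg: "m \<in> open_segment p q" using pq unfolding m_def by (simp add: midpoint_in_open_segment)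
  have cvL: "convex L"
  proof -
    have "L = {x. inner (nv L) x = cv L}" using nvcv L by blast
    then show ?thesis by (metis convex_hyperplane)
  qed
  have mL: "m \<in> L" using mseg segment_open_subset_closed closed_segment_subset[OF pL qL cvL] by blast
  have mM: "m \<notin> M" if "M \<in> A" "M \<noteq> L" for M
  proof
    assume "m \<in> M"
    then have "m \<in> vertices A" using that L mL unfolding vertices_def by blast
    then show False using nov mseg by blast
  qed
  define sg where "sg M = (if M = L then (if cv L < inner (nv L) r then 1 else -1)
                            else (if cv M < inner (nv M) m then 1 else -1::real))" for M
  define u where "u M = sg M *\<^sub>R nv M" for M
  define d where "d M = sg M * cv M" for M
  have sg: "sg M = 1 \<or> sg M = -1" for M unfolding sg_def by auto
  have g: "goodrep A u d"
    unfolding goodrep_def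
  proof
    fix M assume M: "M \<in> A"
    have "u M \<noteq> 0" using nvcv M sg[of M] unfolding u_def by auto
    moreover have "M = {x. inner (u M) x = d M}"
    proof -
      have "inner (u M) x = d M \<longleftrightarrow> inner (nv M) x = cv M" for x
        using sg[of M] unfolding u_def d_def by auto
      then show ?thesis using nvcv M by auto
    qed
    ultimately show "u M \<noteq> 0 \<and> M = {x. inner (u M) x = d M}" by blast
  qed
  have gm: "\<forall>M\<in>A. M \<noteq> L \<longrightarrow> d M < inner (u M) (midpoint p q)"
  proof (intro ballI impI)
    fix M assume M: "M \<in> A" "M \<noteq> L"
    have "inner (nv M) m \<noteq> cv M" using mM[OF M] nvcv M(1) by blast
    then show "d M < inner (u M) (midpoint p q)"
      unfolding u_def d_def sg_def m_def[symmetric] using M(2) by auto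
  qed
  have gr: "d L < inner (u L) r"
  proof -
    have "inner (nv L) r \<noteq> cv L" using rL nvcv L by blast
    then show ?thesis unfolding u_def d_def sg_def by auto
  qed
  define C where "C = Cset A u d"
  have pC: "p \<in> C" unfolding C_def using end_in_C[OF g L pL qL pq nov gm] .
  have qC: "q \<in> C" unfolding C_def
    using end_in_C[OF g L qL pL pq[symmetric]] nov gm by (simp add: open_segment_commute midpoint_sym)
  have clC: "closed C" unfolding C_def by (rule Cset_closed)
  have cvC: "convex C" unfolding C_def by (rule Cset_convex)
  have bdC: "bounded C" unfolding C_def
    using bounded_lemma[OF g L Mp(1) Mq(1) MpMq pL qL Mp(3) Mq(3) rp rq gr] gm Mp Mq by blast
  have frC: "frontier C = (\<Union>M\<in>A. C \<inter> M)" unfolding C_def using frontier_Cset[OF g fin] .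
  have intC: "interior C \<noteq> {}"
  proof -
    define OO1 where "OO1 = (\<Inter>M\<in>A-{L}. {x. d M < inner (u M) x})"
    have oOO1: "open OO1" unfolding OO1_def using fin by (intro open_INT) (auto simp: open_halfspace_gt)
    have mO: "m \<in> OO1" unfolding OO1_def using gm m_def by auto
    obtain ep where ep: "ep > 0" "ball m ep \<subseteq> OO1" using oOO1 mO open_contains_ball by blast
    have nzL: "u L \<noteq> 0" using goodrep_nz[OF g L] .
    define y where "y = m + (ep / 2 / norm (u L)) *\<^sub>R u L"
    have "dist m y = ep / 2" using nzL ep unfolding y_def dist_norm by simp
    then have yO: "y \<in> OO1" using ep by auto
    have "inner (u L) m = d L" using goodrepD[OF g L] mL by simp
    moreover have "(ep / 2 / norm (u L)) * inner (u L) (u L) > 0" using nzL ep by simp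
    ultimately have yL: "d L < inner (u L) y" unfolding y_def by (simp add: inner_add_right)
    define S where "S = (\<Inter>M\<in>A. {x. d M < inner (u M) x})"
    have oS: "open S" unfolding S_def using fin by (intro open_INT) (auto simp: open_halfspace_gt)
    have yS: "y \<in> S" using yO yL unfolding S_def OO1_def by auto
    have "S \<subseteq> C" unfolding S_def C_def Cset_def by force
    then have "y \<in> interior C" using oS yS interior_maximal interior_open by blast
    then show ?thesis by blast
  qed
  define E where "E = {C \<inter> M | M. M \<in> A \<and> C \<inter> M \<noteq> {}}"
  define lineof where "lineof e' = (SOME M. M \<in> A \<and> C \<inter> M \<noteq> {} \<and> e' = C \<inter> M)" for e'
  have lo: "lineof e' \<in> A \<and> C \<inter> lineof e' \<noteq> {} \<and> e' = C \<inter> lineof e'" if "e' \<in> E" for e'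
  proof -
    have "\<exists>M. M \<in> A \<and> C \<inter> M \<noteq> {} \<and> e' = C \<inter> M" using that unfolding E_def by blast
    then show ?thesis unfolding lineof_def by (rule someI_ex)
  qed
  have Eedge: "\<forall>e'\<in>E. edge_on A (lineof e') e'"
  proof
    fix e' assume "e' \<in> E"
    note h = lo[OF this]
    have "edge_on A (lineof e') (Cset A u d \<inter> lineof e')"
      using edge_lemma[OF g fin gp] bdC h unfolding C_def by blast
    then show "edge_on A (lineof e') e'" using h unfolding C_def by simp
  qed
  have inj: "inj_on lineof E"
  proof (rule inj_onI)
    fix x y assume xy: "x \<in> E" "y \<in> E" "lineof x = lineof y"
    have "x = C \<inter> lineof x" "y = C \<inter> lineof y" using lo xy(1,2) by blast+
    then show "x = y" using xy(3) by simp
  qed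
  have frE: "frontier C = \<Union>E" unfolding frC E_def by blast
  have cpC: "compact C" using bdC clC by (simp add: compact_eq_bounded_closed)
  have cnC: "connected C" using cvC by (rule convex_connected)
  have shape: "alcove_shape A C"
    unfolding alcove_shape_def
    using cpC cvC cnC intC Eedge inj frE by blast
  have alc: "alcove A C"
    unfolding alcove_def using shape minimal[OF g cvC clC intC C_def] by blast
  have "e \<subseteq> C \<inter> L"
    using eseg closed_segment_subset[OF pC qC cvC] closed_segment_subset[OF pL qL cvL] by blast
  then have "e \<subseteq> frontier C" using frC L by blast
  then show ?thesis using alc by blast
qed

end
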